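(* Let $T=(V,E)$ be a tree rooted at $o$ with edge lengths $\ell:E\to\mathbb{R}_{>0}$ and let $F>0$. For any $X_1,X_2,X_3,X_4\subseteq V$, $$\mathrm{cost}(X_1\cup X_2\mid X_3)\le \mathrm{cost}(X_1)+\mathrm{cost}(X_2\mid X_3),$$ $$\mathrm{cost}(X_2\cup X_3)+\mathrm{cost}(X_1\mid X_2\cup X_3)+\mathrm{cost}(X_4\mid X_2\cup X_3)\le \mathrm{cost}(X_1\cup X_2)+\mathrm{cost}(X_3\cup X_4).$$
   Context: $V_v$ is the set of descendants of $v$ in $T$ (including $v$); for an edge $e=(u,v)$ with $v$ the child, $V_e=V_v$. For $X\subseteq V$, $\mathrm{mst}(X)$ is the total length of the minimal subtree of $T$ containing $X\cup\{o\}$, and $\mathrm{mst}_e(X)=\mathrm{mst}(V_e\cap X)$. $c(X,e)=\lceil \mathrm{mst}_e(X)/F\rceil$ for $e\in E$, $\mathrm{cost}(X)=2\sum_{e\in E}c(X,e)\ell(e)$. For $X,X'\subseteq V$ and $e\in E$: $c(X,e\mid X')=\lceil \mathrm{mst}_e(X)/F\rceil$ if $V_e\cap X'=\emptyset$, and $c(X,e\mid X')=\lfloor(\mathrm{mst}_e(X'\cup X)-\mathrm{mst}_e(X'))/F\rfloor$ otherwise; $\mathrm{cost}(X\mid X')=2\sum_{e\in E}c(X,e\mid X')\ell(e)$. *)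

theory Defs
  imports Complex_Main
begin

text \<open>A rooted tree on the finite vertex set V with root r is given by a parent
  function p: every vertex v \<noteq> r has parent p v \<in> V, p r = r, and every vertex
  reaches the root by iterating p. The edge of T with child v is (p v, v);
  hence edges are identified with their child endpoints, E = V - {r}.
  Edge lengths are given by l :: 'a \<Rightarrow> real on these child endpoints.\<close>

definition rooted_tree :: "'a set \<Rightarrow> 'a \<Rightarrow> ('a \<Rightarrow> 'a) \<Rightarrow> bool" where
  "rooted_tree V r p \<longleftrightarrow> finite V \<and> r \<in> V \<and> p r = r \<and>
     (\<forall>v\<in>V - {r}. p v \<in> V) \<and> (\<forall>v\<in>V. \<exists>n. (p ^^ n) v = r)"

definition tree_edges :: "'a set \<Rightarrow> 'a \<Rightarrow> 'a set" where
  "tree_edges V r = V - {r}"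

text \<open>V_v: descendants of v (including v); for the edge e with child v, V_e = V_v.\<close>
definition desc :: "'a set \<Rightarrow> ('a \<Rightarrow> 'a) \<Rightarrow> 'a \<Rightarrow> 'a set" where
  "desc V p v = {x \<in> V. \<exists>n. (p ^^ n) x = v}"

definition root_path_edges :: "'a set \<Rightarrow> 'a \<Rightarrow> ('a \<Rightarrow> 'a) \<Rightarrow> 'a \<Rightarrow> 'a set" where
  "root_path_edges V r p x = {v \<in> V - {r}. \<exists>n. (p ^^ n) x = v}"

text \<open>mst X: total length of the minimal subtree containing X \<union> {r}, i.e. of the
  union of all root-to-x paths, x \<in> X.\<close>
definition mst :: "'a set \<Rightarrow> 'a \<Rightarrow> ('a \<Rightarrow> 'a) \<Rightarrow> ('a \<Rightarrow> real) \<Rightarrow> 'a set \<Rightarrow> real" where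
  "mst V r p l X = (\<Sum>v \<in> (\<Union>x\<in>X. root_path_edges V r p x). l v)"

definition mst_e :: "'a set \<Rightarrow> 'a \<Rightarrow> ('a \<Rightarrow> 'a) \<Rightarrow> ('a \<Rightarrow> real) \<Rightarrow> 'a \<Rightarrow> 'a set \<Rightarrow> real" where
  "mst_e V r p l e X = mst V r p l (desc V p e \<inter> X)"

definition c :: "'a set \<Rightarrow> 'a \<Rightarrow> ('a \<Rightarrow> 'a) \<Rightarrow> ('a \<Rightarrow> real) \<Rightarrow> real \<Rightarrow> 'a set \<Rightarrow> 'a \<Rightarrow> int" where
  "c V r p l F X e = \<lceil>mst_e V r p l e X / F\<rceil>"

definition cost :: "'a set \<Rightarrow> 'a \<Rightarrow> ('a \<Rightarrow> 'a) \<Rightarrow> ('a \<Rightarrow> real) \<Rightarrow> real \<Rightarrow> 'a set \<Rightarrow> real" where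
  "cost V r p l F X = 2 * (\<Sum>e \<in> tree_edges V r. of_int (c V r p l F X e) * l e)"

definition c_cond :: "'a set \<Rightarrow> 'a \<Rightarrow> ('a \<Rightarrow> 'a) \<Rightarrow> ('a \<Rightarrow> real) \<Rightarrow> real \<Rightarrow> 'a set \<Rightarrow> 'a set \<Rightarrow> 'a \<Rightarrow> int" where
  "c_cond V r p l F X X' e =
     (if desc V p e \<inter> X' = {} then \<lceil>mst_e V r p l e X / F\<rceil>
      else \<lfloor>(mst_e V r p l e (X' \<union> X) - mst_e V r p l e X') / F\<rfloor>)"

definition cost_cond :: "'a set \<Rightarrow> 'a \<Rightarrow> ('a \<Rightarrow> 'a) \<Rightarrow> ('a \<Rightarrow> real) \<Rightarrow> real \<Rightarrow> 'a set \<Rightarrow> 'a set \<Rightarrow> real" where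
  "cost_cond V r p l F X X' = 2 * (\<Sum>e \<in> tree_edges V r. of_int (c_cond V r p l F X X' e) * l e)"

end

theory Submission imports Defs begin

lemma fl1: fixes x a b :: real assumes "x \<le> a + b" shows "\<lfloor>x\<rfloor> \<le> \<lceil>a\<rceil> + \<lfloor>b\<rfloor>"
proof -
  have "real_of_int \<lfloor>x\<rfloor> < of_int (\<lceil>a\<rceil> + \<lfloor>b\<rfloor> + 1)"
    using assms of_int_floor_le[of x] le_of_int_ceiling[of a] real_of_int_floor_add_one_gt[of b] by simp linarith
  hence "\<lfloor>x\<rfloor> < \<lceil>a\<rceil> + \<lfloor>b\<rfloor> + 1" by linarith
  thus ?thesis by simp
qed

lemma cl1: fixes x a b :: real assumes "x \<le> a + b" shows "\<lceil>x\<rceil> \<le> \<lceil>a\<rceil> + \<lceil>b\<rceil>"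
proof -
  have "x \<le> of_int (\<lceil>a\<rceil> + \<lceil>b\<rceil>)" using assms le_of_int_ceiling[of a] le_of_int_ceiling[of b] by simp linarith
  thus ?thesis by (simp add: ceiling_le_iff)
qed

lemma cl2: fixes a b d :: real assumes "a + b + d \<le> s + t"
  shows "\<lceil>a\<rceil> + \<lfloor>b\<rfloor> + \<lfloor>d\<rfloor> \<le> \<lceil>s\<rceil> + \<lceil>t\<rceil>"
proof -
  have "real_of_int (\<lceil>a\<rceil> + \<lfloor>b\<rfloor> + \<lfloor>d\<rfloor>) < of_int (\<lceil>s\<rceil> + \<lceil>t\<rceil> + 1)"
    using assms of_int_floor_le[of b] of_int_floor_le[of d] ceiling_correct[of a]
      le_of_int_ceiling[of s] le_of_int_ceiling[of t] by simp linarith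
  hence "\<lceil>a\<rceil> + \<lfloor>b\<rfloor> + \<lfloor>d\<rfloor> < \<lceil>s\<rceil> + \<lceil>t\<rceil> + 1" by linarith
  thus ?thesis by simp
qed

locale T =
  fixes V :: "'a set" and r :: 'a and p :: "'a \<Rightarrow> 'a" and l :: "'a \<Rightarrow> real"
  assumes finV: "finite V" and lnn: "\<forall>e \<in> V - {r}. l e \<ge> 0"
begin

abbreviation U where "U S \<equiv> (\<Union>x\<in>S. root_path_edges V r p x)"

lemma U_sub: "U S \<subseteq> V - {r}" unfolding root_path_edges_def by auto

lemma finU: "finite (U S)" using U_sub finV by (meson finite_Diff finite_subset)

lemma w_mono: "P \<subseteq> Q \<Longrightarrow> Q \<subseteq> V - {r} \<Longrightarrow> sum l P \<le> sum l Q"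
  apply (rule sum_mono2) using finV lnn by (auto intro: finite_subset)

lemma w_un: "finite P \<Longrightarrow> finite Q \<Longrightarrow> sum l (P \<union> Q) = sum l P + sum l (Q - P)"
  by (metis Un_Diff_cancel Diff_disjoint sum.union_disjoint finite_Diff)

lemma mst_empty: "mst V r p l {} = 0" by (simp add: mst_def)

lemma mst_sub: "mst V r p l (A \<union> B) \<le> mst V r p l A + mst V r p l B"
proof -
  have "mst V r p l (A \<union> B) = sum l (U A) + sum l (U B - U A)"
    unfolding mst_def by (simp add: UN_Un w_un finU)
  moreover have "sum l (U B - U A) \<le> sum l (U B)" by (rule w_mono) (use U_sub in auto)
  ultimately show ?thesis unfolding mst_def by simp
qed

lemma mst_dim: assumes "A \<subseteq> B"
  shows "mst V r p l (B \<union> Z) - mst V r p l B \<le> mst V r p l (A \<union> Z) - mst V r p l A"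
proof -
  have 1: "mst V r p l (B \<union> Z) = sum l (U B) + sum l (U Z - U B)"
    unfolding mst_def by (simp add: UN_Un w_un finU)
  have 2: "mst V r p l (A \<union> Z) = sum l (U A) + sum l (U Z - U A)"
    unfolding mst_def by (simp add: UN_Un w_un finU)
  have "U A \<subseteq> U B" using assms by auto
  hence "sum l (U Z - U B) \<le> sum l (U Z - U A)" by (intro w_mono) (use U_sub[of Z] in blast)+
  thus ?thesis using 1 2 unfolding mst_def by simp
qed

lemma mst_nn: "mst V r p l A \<ge> 0"
  unfolding mst_def using lnn U_sub by (intro sum_nonneg) auto

lemma e_un: "mst_e V r p l e (A \<union> B) = mst V r p l (desc V p e \<inter> A \<union> desc V p e \<inter> B)"
  unfolding mst_e_def by (simp add: Int_Un_distrib)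

lemma e_sub: "mst_e V r p l e (A \<union> B) \<le> mst_e V r p l e A + mst_e V r p l e B"
  unfolding e_un using mst_sub unfolding mst_e_def by blast

lemma e_dim: assumes "A \<subseteq> B"
  shows "mst_e V r p l e (B \<union> Z) - mst_e V r p l e B \<le> mst_e V r p l e (A \<union> Z) - mst_e V r p l e A"
  unfolding e_un using mst_dim[of "desc V p e \<inter> A" "desc V p e \<inter> B"] assms unfolding mst_e_def by blast

lemma e_empty: "desc V p e \<inter> A = {} \<Longrightarrow> mst_e V r p l e A = 0"
  unfolding mst_e_def by (simp add: mst_empty)

lemma e_nn: "mst_e V r p l e A \<ge> 0" unfolding mst_e_def by (rule mst_nn)

lemma edge1: assumes F: "F > 0"
  shows "c_cond V r p l F (X1 \<union> X2) X3 e \<le> c V r p l F X1 e + c_cond V r p l F X2 X3 e"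
proof (cases "desc V p e \<inter> X3 = {}")
  case True
  have "mst_e V r p l e (X1 \<union> X2) / F \<le> mst_e V r p l e X1 / F + mst_e V r p l e X2 / F"
    using e_sub[of e X1 X2] F by (simp add: add_divide_distrib[symmetric] divide_right_mono)
  then show ?thesis using True unfolding c_cond_def c_def by (simp add: cl1)
next
  case False
  have "mst_e V r p l e (X3 \<union> X2 \<union> X1) - mst_e V r p l e (X3 \<union> X2) \<le> mst_e V r p l e ({} \<union> X1) - mst_e V r p l e {}"
    by (rule e_dim) auto
  hence "mst_e V r p l e (X3 \<union> (X1 \<union> X2)) - mst_e V r p l e X3 \<le> mst_e V r p l e X1 + (mst_e V r p l e (X3 \<union> X2) - mst_e V r p l e X3)"
    using e_empty[of e "{}"] by (simp add: Un_ac)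
  hence "(mst_e V r p l e (X3 \<union> (X1 \<union> X2)) - mst_e V r p l e X3) / F \<le> mst_e V r p l e X1 / F + (mst_e V r p l e (X3 \<union> X2) - mst_e V r p l e X3) / F"
    using F by (simp add: add_divide_distrib[symmetric] divide_right_mono)
  then show ?thesis using False unfolding c_cond_def c_def by (simp add: fl1)
qed

lemma edge2: assumes F: "F > 0"
  shows "c V r p l F (X2 \<union> X3) e + c_cond V r p l F X1 (X2 \<union> X3) e + c_cond V r p l F X4 (X2 \<union> X3) e
     \<le> c V r p l F (X1 \<union> X2) e + c V r p l F (X3 \<union> X4) e"
proof (cases "desc V p e \<inter> (X2 \<union> X3) = {}")
  case True
  have a: "mst_e V r p l e (X2 \<union> X3) = 0" using True by (rule e_empty)
  have b: "mst_e V r p l e (X1 \<union> X2) = mst_e V r p l e X1" "mst_e V r p l e (X3 \<union> X4) = mst_e V r p l e X4"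
    using True unfolding mst_e_def by (auto intro!: arg_cong[where f="mst V r p l"])
  show ?thesis using True unfolding c_cond_def c_def a b by simp
next
  case False
  let ?m = "mst_e V r p l e"
  have 1: "?m ((X2 \<union> X3) \<union> X1) - ?m (X2 \<union> X3) \<le> ?m (X2 \<union> X1) - ?m X2" by (rule e_dim) auto
  have 2: "?m ((X3 \<union> X2) \<union> X4) - ?m (X3 \<union> X2) \<le> ?m (X3 \<union> X4) - ?m X3" by (rule e_dim) auto
  have 3: "?m (X2 \<union> X3) \<le> ?m X2 + ?m X3" by (rule e_sub)
  have "?m (X2 \<union> X3) + (?m ((X2 \<union> X3) \<union> X1) - ?m (X2 \<union> X3)) + (?m ((X2 \<union> X3) \<union> X4) - ?m (X2 \<union> X3))
      \<le> ?m (X1 \<union> X2) + ?m (X3 \<union> X4)" using 1 2 3 by (simp add: Un_ac)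
  hence "?m (X2 \<union> X3) / F + (?m ((X2 \<union> X3) \<union> X1) - ?m (X2 \<union> X3)) / F + (?m ((X2 \<union> X3) \<union> X4) - ?m (X2 \<union> X3)) / F
      \<le> ?m (X1 \<union> X2) / F + ?m (X3 \<union> X4) / F"
    using F by (simp add: add_divide_distrib[symmetric] divide_right_mono)
  then show ?thesis using False unfolding c_cond_def c_def by (simp add: cl2)
qed

end

theorem lemma4p3:
  fixes V :: "'a set" and r :: 'a and p :: "'a \<Rightarrow> 'a" and l :: "'a \<Rightarrow> real" and F :: real
    and X1 X2 X3 X4 :: "'a set"
  assumes tree: "rooted_tree V r p"
    and lpos: "\<forall>e \<in> tree_edges V r. l e > 0"
    and Fpos: "F > 0"
    and X: "X1 \<subseteq> V" "X2 \<subseteq> V" "X3 \<subseteq> V" "X4 \<subseteq> V"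
  shows "cost_cond V r p l F (X1 \<union> X2) X3 \<le> cost V r p l F X1 + cost_cond V r p l F X2 X3
         \<and> cost V r p l F (X2 \<union> X3) + cost_cond V r p l F X1 (X2 \<union> X3) + cost_cond V r p l F X4 (X2 \<union> X3)
           \<le> cost V r p l F (X1 \<union> X2) + cost V r p l F (X3 \<union> X4)"
proof
  interpret T V r p l
    using tree lpos by unfold_locales (auto simp: rooted_tree_def tree_edges_def less_imp_le)
  have lnn': "\<And>e. e \<in> tree_edges V r \<Longrightarrow> l e \<ge> 0" using lpos by (simp add: less_imp_le)
  have "(\<Sum>e \<in> tree_edges V r. of_int (c_cond V r p l F (X1 \<union> X2) X3 e) * l e)
     \<le> (\<Sum>e \<in> tree_edges V r. of_int (c V r p l F X1 e) * l e + of_int (c_cond V r p l F X2 X3 e) * l e)"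
  proof (rule sum_mono)
    fix e assume "e \<in> tree_edges V r"
    hence "of_int (c_cond V r p l F (X1 \<union> X2) X3 e) * l e \<le> of_int (c V r p l F X1 e + c_cond V r p l F X2 X3 e) * l e"
      using lnn' edge1[OF Fpos, of X1 X2 X3 e] by (intro mult_right_mono) simp_all
    thus "of_int (c_cond V r p l F (X1 \<union> X2) X3 e) * l e \<le> of_int (c V r p l F X1 e) * l e + of_int (c_cond V r p l F X2 X3 e) * l e"
      by (simp add: distrib_right)
  qed
  thus "cost_cond V r p l F (X1 \<union> X2) X3 \<le> cost V r p l F X1 + cost_cond V r p l F X2 X3"
    unfolding cost_def cost_cond_def by (simp add: sum.distrib)
  have "(\<Sum>e \<in> tree_edges V r. of_int (c V r p l F (X2 \<union> X3) e) * l e + of_int (c_cond V r p l F X1 (X2 \<union> X3) e) * l e + of_int (c_cond V r p l F X4 (X2 \<union> X3) e) * l e)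
     \<le> (\<Sum>e \<in> tree_edges V r. of_int (c V r p l F (X1 \<union> X2) e) * l e + of_int (c V r p l F (X3 \<union> X4) e) * l e)"
  proof (rule sum_mono)
    fix e assume "e \<in> tree_edges V r"
    hence "of_int (c V r p l F (X2 \<union> X3) e + c_cond V r p l F X1 (X2 \<union> X3) e + c_cond V r p l F X4 (X2 \<union> X3) e) * l e
        \<le> of_int (c V r p l F (X1 \<union> X2) e + c V r p l F (X3 \<union> X4) e) * l e"
      using lnn' edge2[OF Fpos, of X2 X3 e X1 X4] by (intro mult_right_mono) simp_all
    thus "of_int (c V r p l F (X2 \<union> X3) e) * l e + of_int (c_cond V r p l F X1 (X2 \<union> X3) e) * l e + of_int (c_cond V r p l F X4 (X2 \<union> X3) e) * l e
        \<le> of_int (c V r p l F (X1 \<union> X2) e) * l e + of_int (c V r p l F (X3 \<union> X4) e) * l e"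
      by (simp add: distrib_right)
  qed
  thus "cost V r p l F (X2 \<union> X3) + cost_cond V r p l F X1 (X2 \<union> X3) + cost_cond V r p l F X4 (X2 \<union> X3)
           \<le> cost V r p l F (X1 \<union> X2) + cost V r p l F (X3 \<union> X4)"
    unfolding cost_def cost_cond_def by (simp add: sum.distrib)
qed

end
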